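(* Let $(V,\mathcal{G})$ be an instance of $k$-\textsc{Compatible Ordering} with $\mathcal{G}=\{(A_1,B_1),\dots,(A_k,B_k)\}$. If there exists $i\in[k]$ such that the union of $A_i$ and $B_i$ is a directed acyclic graph, then $(V,\mathcal{G})$ is a yes-instance.
   Context: For a positive integer $k$, write $[k]=\{1,\dots,k\}$. An instance of $k$-\textsc{Compatible Ordering} consists of a finite vertex set $V$ with $n=|V|$ and a collection $\mathcal{G}$ of $k$ pairs of directed graphs $(A_1,B_1),\dots,(A_k,B_k)$ with $V(A_i)=V(B_i)=V$ for all $i\in[k]$. The instance is a yes-instance if and only if there exist an ordering $s_1,\dots,s_n$ of $V$ and labels $\ell_1,\dots,\ell_n\in[k]$ such that for every $i\in[n]$: (i) $s_i$ has no out-neighbor in $A_{\ell_i}$ among $s_{i+1},\dots,s_n$, and (ii) $s_i$ has no in-neighbor in $B_{\ell_i}$ among $s_1,\dots,s_{i-1}$. The union of $A_i$ and $B_i$ is the directed graph on $V$ whose arc set is the union of their arc sets. *)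

theory Defs
  imports Main
begin

definition digraph_on :: "'a set \<Rightarrow> ('a \<times> 'a) set \<Rightarrow> bool" where
  "digraph_on V E \<longleftrightarrow> E \<subseteq> V \<times> V"

definition compat_instance ::
  "'a set \<Rightarrow> nat \<Rightarrow> (nat \<Rightarrow> ('a \<times> 'a) set) \<Rightarrow> (nat \<Rightarrow> ('a \<times> 'a) set) \<Rightarrow> bool" where
  "compat_instance V k A B \<longleftrightarrow> finite V \<and> k \<ge> 1 \<and>
     (\<forall>i\<in>{1..k}. digraph_on V (A i) \<and> digraph_on V (B i))"

text \<open>Yes-instance: an ordering s_1..s_n of V (a distinct list with set V, 0-indexed) and
  labels l_1..l_n in [k] such that (i) s_i has no out-neighbour in A_{l_i} among later vertices,
  (ii) s_i has no in-neighbour in B_{l_i} among earlier vertices.\<close>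

definition compat_yes ::
  "'a set \<Rightarrow> nat \<Rightarrow> (nat \<Rightarrow> ('a \<times> 'a) set) \<Rightarrow> (nat \<Rightarrow> ('a \<times> 'a) set) \<Rightarrow> bool" where
  "compat_yes V k A B \<longleftrightarrow>
     (\<exists>s :: 'a list. \<exists>l :: nat \<Rightarrow> nat.
        distinct s \<and> set s = V \<and>
        (\<forall>i < length s. l i \<in> {1..k}) \<and>
        (\<forall>i < length s. \<forall>j < length s. i < j \<longrightarrow> (s ! i, s ! j) \<notin> A (l i)) \<and>
        (\<forall>i < length s. \<forall>j < length s. j < i \<longrightarrow> (s ! j, s ! i) \<notin> B (l i)))"

end

theory Submission
  imports Defs
begin

lemma topo_list:
  assumes "finite V" "wf E"
  shows "\<exists>s. distinct s \<and> set s = V \<and>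
    (\<forall>i < length s. \<forall>j < length s. i < j \<longrightarrow> (s ! i, s ! j) \<notin> E)"
  using assms(1)
proof (induction V rule: finite_psubset_induct)
  case (psubset V)
  show ?case
  proof (cases "V = {}")
    case True
    then show ?thesis by auto
  next
    case False
    then obtain x where "x \<in> V" by auto
    then obtain z where z: "z \<in> V" "\<forall>y. (y, z) \<in> E \<longrightarrow> y \<notin> V"
      using assms(2) unfolding wf_eq_minimal by blast
    have "V - {z} \<subset> V" using z by auto
    from psubset.IH[OF this] obtain s where s: "distinct s" "set s = V - {z}"
      "\<forall>i < length s. \<forall>j < length s. i < j \<longrightarrow> (s ! i, s ! j) \<notin> E" by blast
    let ?t = "s @ [z]"
    have "distinct ?t" using s by auto
    moreover have "set ?t = V" using s z by auto
    moreover have "\<forall>i < length ?t. \<forall>j < length ?t. i < j \<longrightarrow> (?t ! i, ?t ! j) \<notin> E"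
    proof (intro allI impI)
      fix i j assume ij: "i < length ?t" "j < length ?t" "i < j"
      show "(?t ! i, ?t ! j) \<notin> E"
      proof (cases "j < length s")
        case True
        then have "?t ! i = s ! i" "?t ! j = s ! j" using ij by (simp_all add: nth_append)
        then show ?thesis using s(3) ij True by simp
      next
        case False
        then have "j = length s" using ij by auto
        have il: "i < length s" using ij \<open>j = length s\<close> by simp
        have ti: "?t ! i = s ! i" using il by (simp add: nth_append)
        have "s ! i \<in> V" using il s(2) nth_mem by blast
        moreover have "?t ! j = z" using \<open>j = length s\<close> by simp
        ultimately show ?thesis using z(2) ti by metis
      qed
    qed
    ultimately show ?thesis by blast
  qed
qed

theorem corollary1:
  fixes V :: "'a set" and k :: nat and A B :: "nat \<Rightarrow> ('a \<times> 'a) set"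
  assumes "compat_instance V k A B"
    and "\<exists>i\<in>{1..k}. acyclic (A i \<union> B i)"
  shows "compat_yes V k A B"
proof -
  obtain c where c: "c \<in> {1..k}" "acyclic (A c \<union> B c)" using assms(2) by blast
  have fV: "finite V" and d: "A c \<subseteq> V \<times> V" "B c \<subseteq> V \<times> V"
    using assms(1) c(1) unfolding compat_instance_def digraph_on_def by auto
  have "finite (A c \<union> B c)" using d fV by (meson finite_SigmaI finite_Un finite_subset)
  then have "wf (A c \<union> B c)" using c(2) by (rule finite_acyclic_wf)
  from topo_list[OF fV this] obtain s where s: "distinct s" "set s = V"
    "\<forall>i < length s. \<forall>j < length s. i < j \<longrightarrow> (s ! i, s ! j) \<notin> A c \<union> B c" by blast
  show ?thesis unfolding compat_yes_def
    apply (rule exI[of _ s], rule exI[of _ "\<lambda>_. c"])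
    using s c(1) by simp
qed

end
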